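(* In a realisation of a local affine Gaudin model (setting below), let $\mathcal Q(z)=-\frac{1}{2\varphi(z)}\int_{\mathbb D}dx\,\kappa\big(\Gamma(z,x),\Gamma(z,x)\big)$. Then $\mathcal Q(z)=-\sum_{\alpha\in\Sigma}\sum_{p=0}^{m_\alpha-1}\frac{\mathcal D^\alpha_{[p]}}{(z-z_\alpha)^{p+1}}+\mathcal Q_{\rm reg}(z)$, where $\mathcal Q_{\rm reg}(z)$ is regular at all positions $z_\alpha$, $\alpha\in\Sigma$.
   Context: $\mathfrak g$: finite-dimensional simple complex Lie algebra, $\kappa$: minus its Killing form, $C_{12}=I_a\otimes I^a$ for dual bases w.r.t. $\kappa$; $\mathfrak g_0$: real form, fixed points of an antilinear involution $\tau$. $\mathbb D$ is $\mathbb R$ or the circle; $\delta'_{xy}=\partial_x\delta(x-y)$. Data: a finite set of sites $\Sigma=\Sigma_r\sqcup\Sigma_c\sqcup\bar\Sigma_c$ (real sites, complex sites, their conjugates $\bar\alpha$), multiplicities $m_\alpha\ge1$ ($m_{\bar\alpha}=m_\alpha$), levels $\ell^\alpha_{[p]}$, $0\le p\le m_\alpha-1$ (real for real sites, $\ell^{\bar\alpha}_{[p]}=\overline{\ell^\alpha_{[p]}}$), with $\ell^\alpha_{[m_\alpha-1]}\neq0$; pairwise distinct positions $z_\alpha$ (real for real sites, $z_{\bar\alpha}=\overline{z_\alpha}$); a real $\ell^\infty\neq0$. A realisation is a Poisson algebra $\mathcal A$ of local observables of a field theory on $\mathbb D$ containing $\mathfrak g$-valued fields $\mathcal J^\alpha_{[p]}(x)$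 with $\{\mathcal J^\alpha_{[p]}{}_1(x),\mathcal J^\beta_{[q]}{}_2(y)\}=\delta_{\alpha\beta}([C_{12},\mathcal J^\alpha_{[p+q]}{}_1(x)]\delta_{xy}-\ell^\alpha_{[p+q]}C_{12}\delta'_{xy})$ if $p+q<m_\alpha$ and $0$ otherwise, with reality conditions $\tau(\mathcal J^\alpha_{[p]})=\mathcal J^\alpha_{[p]}$ (real $\alpha$), $\tau(\mathcal J^\alpha_{[p]})=\mathcal J^{\bar\alpha}_{[p]}$ (complex $\alpha$). Twist function $\varphi(z)=\sum_{\alpha\in\Sigma}\sum_{p=0}^{m_\alpha-1}\frac{\ell^\alpha_{[p]}}{(z-z_\alpha)^{p+1}}-\ell^\infty$; Gaudin Lax matrix $\Gamma(z,x)=\sum_\alpha\sum_p\frac{\mathcal J^\alpha_{[p]}(x)}{(z-z_\alpha)^{p+1}}$. For each $\alpha$, $\eta^\alpha_{[p]}$ ($0\le p\le 2m_\alpha-2$) denotes the unique solution of $\sum_{p=0}^{m_\alpha-1-r}\eta^\alpha_{[p+q]}\ell^\alpha_{[p+r]}=\delta_{q,r}$ for all $q,r\in\{0,\dots,m_\alpha-1\}$, and $\mathcal D^\alpha_{[p]}=\frac12\sum_{q,r=0,\,q+r\ge p}^{m_\alpha-1}\eta^\alpha_{[q+r-p]}\int_{\mathbb D}dx\,\kappa(\mathcal J^\alpha_{[q]}(x),\mathcal J^\alpha_{[r]}(x))$. *)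

theory Defs
  imports "HOL-Analysis.Analysis"
begin

text \<open>The complexified Lie algebra g is modelled as complex^'n (coordinates w.r.t. a basis);
  the invariant form kappa is given by a symmetric complex matrix Bk.\<close>

definition kappa :: "complex^'n^'n \<Rightarrow> complex^'n \<Rightarrow> complex^'n \<Rightarrow> complex" where
  "kappa Bk v w = (\<Sum>i\<in>UNIV. \<Sum>j\<in>UNIV. v$i * Bk$i$j * w$j)"

definition twist :: "'s set \<Rightarrow> ('s \<Rightarrow> nat) \<Rightarrow> ('s \<Rightarrow> nat \<Rightarrow> complex) \<Rightarrow> ('s \<Rightarrow> complex)
    \<Rightarrow> real \<Rightarrow> complex \<Rightarrow> complex" where
  "twist S m lev zpos linf w =
     (\<Sum>\<alpha>\<in>S. \<Sum>p<m \<alpha>. lev \<alpha> p / (w - zpos \<alpha>) ^ (p + 1)) - complex_of_real linf"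

definition gaudin_lax :: "'s set \<Rightarrow> ('s \<Rightarrow> nat) \<Rightarrow> ('s \<Rightarrow> complex)
    \<Rightarrow> ('s \<Rightarrow> nat \<Rightarrow> real \<Rightarrow> complex^'n) \<Rightarrow> complex \<Rightarrow> real \<Rightarrow> complex^'n" where
  "gaudin_lax S m zpos J w x =
     (\<Sum>\<alpha>\<in>S. \<Sum>p<m \<alpha>. (1 / (w - zpos \<alpha>) ^ (p + 1)) *s J \<alpha> p x)"

definition eta_coeffs :: "nat \<Rightarrow> (nat \<Rightarrow> complex) \<Rightarrow> nat \<Rightarrow> complex" where
  "eta_coeffs mm lv = (THE \<eta>. (\<forall>k. 2 * mm - 2 < k \<longrightarrow> \<eta> k = 0) \<and>
      (\<forall>q<mm. \<forall>r<mm. (\<Sum>p\<le>mm - 1 - r. \<eta> (p + q) * lv (p + r)) = (if q = r then 1 else 0)))"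

definition charge_D :: "real measure \<Rightarrow> complex^'n^'n \<Rightarrow> ('s \<Rightarrow> nat) \<Rightarrow> ('s \<Rightarrow> nat \<Rightarrow> complex)
    \<Rightarrow> ('s \<Rightarrow> nat \<Rightarrow> real \<Rightarrow> complex^'n) \<Rightarrow> 's \<Rightarrow> nat \<Rightarrow> complex" where
  "charge_D M Bk m lev J \<alpha> p =
     (1/2) * (\<Sum>q<m \<alpha>. \<Sum>r<m \<alpha>. (if p \<le> q + r then
        eta_coeffs (m \<alpha>) (lev \<alpha>) (q + r - p) * integral\<^sup>L M (\<lambda>x. kappa Bk (J \<alpha> q x) (J \<alpha> r x))
      else 0))"

definition charge_Q :: "real measure \<Rightarrow> complex^'n^'n \<Rightarrow> 's set \<Rightarrow> ('s \<Rightarrow> nat)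
    \<Rightarrow> ('s \<Rightarrow> nat \<Rightarrow> complex) \<Rightarrow> ('s \<Rightarrow> complex) \<Rightarrow> real
    \<Rightarrow> ('s \<Rightarrow> nat \<Rightarrow> real \<Rightarrow> complex^'n) \<Rightarrow> complex \<Rightarrow> complex" where
  "charge_Q M Bk S m lev zpos linf J w =
     - (1 / (2 * twist S m lev zpos linf w)) *
       integral\<^sup>L M (\<lambda>x. kappa Bk (gaudin_lax S m zpos J w x) (gaudin_lax S m zpos J w x))"

end

theory Submission
  imports Defs "HOL-Computational_Algebra.Formal_Power_Series"
begin


definition eta_sys :: "nat \<Rightarrow> (nat \<Rightarrow> complex) \<Rightarrow> (nat \<Rightarrow> complex) \<Rightarrow> bool" where
  "eta_sys mm lv \<eta> \<longleftrightarrow> (\<forall>k. 2 * mm - 2 < k \<longrightarrow> \<eta> k = 0) \<and>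
      (\<forall>q<mm. \<forall>r<mm. (\<Sum>p\<le>mm - 1 - r. \<eta> (p + q) * lv (p + r)) = (if q = r then 1 else 0))"

lemma eta_exists:
  assumes n1: "1 \<le> n" and top: "lv (n - 1) \<noteq> 0"
  shows "\<exists>\<eta>. eta_sys n lv \<eta>"
proof -
  define F :: "complex fps" where "F = Abs_fps (\<lambda>i. if i < n then lv (n - 1 - i) else 0)"
  define c where "c = inverse F"
  have F0: "fps_nth F 0 \<noteq> 0" using top n1 by (simp add: F_def)
  have cF: "c * F = 1" unfolding c_def using F0 by (rule inverse_mult_eq_1)
  have conv: "(\<Sum>i=0..k. fps_nth c i * fps_nth F (k - i)) = (if k = 0 then 1 else 0)" for k
    using arg_cong[OF cF, of "\<lambda>f. fps_nth f k"] by (simp add: fps_mult_nth)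
  define \<eta> where "\<eta> j = (if n - 1 \<le> j \<and> j \<le> 2*n-2 then fps_nth c (j - (n - 1)) else 0)" for j
  have "eta_sys n lv \<eta>"
    unfolding eta_sys_def
  proof (intro conjI allI impI)
    fix k assume "2 * n - 2 < k" then show "\<eta> k = 0" by (simp add: \<eta>_def)
  next
    fix q r assume q: "q < n" and r: "r < n"
    let ?g = "\<lambda>p. \<eta> (p + q) * lv (p + r)"
    show "(\<Sum>p\<le>n - 1 - r. ?g p) = (if q = r then 1 else 0)"
    proof (cases "r \<le> q")
      case False
      have "?g p = 0" if "p \<le> n - 1 - r" for p
      proof -
        have "\<not> (n - 1 \<le> p + q)" using that False q r by arith
        then show ?thesis by (simp add: \<eta>_def)
      qed
      then have "(\<Sum>p\<le>n - 1 - r. ?g p) = 0" by (intro sum.neutral) auto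
      then show ?thesis using False by simp
    next
      case True
      have split: "{..n - 1 - r} = {..<n - 1 - q} \<union> {n - 1 - q..n - 1 - r}" using True q r by auto
      have z: "?g p = 0" if "p < n - 1 - q" for p
      proof -
        have "\<not> (n - 1 \<le> p + q)" using that q r by arith
        then show ?thesis by (simp add: \<eta>_def)
      qed
      have "(\<Sum>p\<le>n - 1 - r. ?g p) = (\<Sum>p\<in>{n - 1 - q..n - 1 - r}. ?g p)"
        unfolding split by (subst sum.union_disjoint) (auto simp: z)
      also have "\<dots> = (\<Sum>p\<in>{0 + (n - 1 - q)..(q - r) + (n - 1 - q)}. ?g p)"
        using True q r by (intro sum.cong) auto
      also have "\<dots> = (\<Sum>i=0..q - r. ?g (i + (n - 1 - q)))"
        by (rule sum.shift_bounds_cl_nat_ivl)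
      also have "\<dots> = (\<Sum>i=0..q - r. fps_nth c i * fps_nth F (q - r - i))"
      proof (intro sum.cong refl)
        fix i assume i: "i \<in> {0..q - r}"
        have a: "n - 1 \<le> i + (n - 1 - q) + q" "i + (n - 1 - q) + q \<le> 2*n-2"
             "i + (n - 1 - q) + q - (n - 1) = i" using i q r True by auto
        have "\<eta> (i + (n - 1 - q) + q) = fps_nth c i" using a unfolding \<eta>_def by presburger
        moreover have "fps_nth F (q - r - i) = lv (i + (n - 1 - q) + r)"
        proof -
          have b: "q - r - i < n" "n - 1 - (q - r - i) = i + (n - 1 - q) + r" using i q r True by auto
          show ?thesis unfolding F_def using b by simp
        qed
        ultimately show "?g (i + (n - 1 - q)) = fps_nth c i * fps_nth F (q - r - i)" by simp
      qed
      also have "\<dots> = (if q = r then 1 else 0)" using conv[of "q - r"] True by auto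
      finally show ?thesis .
    qed
  qed
  then show ?thesis by blast
qed

lemma eta_unique:
  assumes n1: "1 \<le> n" and top: "lv (n - 1) \<noteq> 0"
    and e1: "eta_sys n lv \<eta>1" and e2: "eta_sys n lv \<eta>2"
  shows "\<eta>1 = \<eta>2"
proof
  fix j show "\<eta>1 j = \<eta>2 j"
  proof (induction j rule: less_induct)
    case (less j)
    show ?case
    proof (cases "2 * n - 2 < j")
      case True then show ?thesis using e1 e2 by (simp add: eta_sys_def)
    next
      case False
      define q where "q = min j (n - 1)"
      define r where "r = n - 1 + q - j"
      have q: "q < n" and r: "r < n" and k: "n - 1 - r = j - q" and qj: "q \<le> j"
        using False n1 by (auto simp: q_def r_def)
      have last: "j - q + r = n - 1" "j - q + q = j" using False n1 qj by (auto simp: q_def r_def)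
      have eq: "\<And>\<eta>. (\<Sum>p\<le>n - 1 - r. \<eta> (p + q) * lv (p + r)) =
            (\<Sum>p<j - q. \<eta> (p + q) * lv (p + r)) + \<eta> j * lv (n - 1)"
        unfolding k by (simp add: lessThan_Suc_atMost[symmetric] last)
      have s: "(\<Sum>p<j - q. \<eta>1 (p + q) * lv (p + r)) = (\<Sum>p<j - q. \<eta>2 (p + q) * lv (p + r))"
        by (intro sum.cong refl) (simp add: less.IH)
      have "(\<Sum>p\<le>n - 1 - r. \<eta>1 (p + q) * lv (p + r)) = (\<Sum>p\<le>n - 1 - r. \<eta>2 (p + q) * lv (p + r))"
        using e1 e2 q r by (simp add: eta_sys_def)
      then have "\<eta>1 j * lv (n - 1) = \<eta>2 j * lv (n - 1)" unfolding eq s by simp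
      then show ?thesis using top by simp
    qed
  qed
qed

lemma eta_coeffs_sys:
  assumes n1: "1 \<le> n" and top: "lv (n - 1) \<noteq> 0"
  shows "eta_sys n lv (eta_coeffs n lv)"
proof -
  have "\<exists>!\<eta>. eta_sys n lv \<eta>" using eta_exists[of n lv, OF n1 top] eta_unique[of n lv, OF n1 top] by blast
  then have "eta_sys n lv (THE \<eta>. eta_sys n lv \<eta>)" by (rule theI')
  then show ?thesis unfolding eta_coeffs_def eta_sys_def[abs_def] by simp
qed



lemma eta_low:
  assumes n1: "1 \<le> n" and top: "lv (n - 1) \<noteq> 0" and sys: "eta_sys n lv \<eta>" and i: "i < n - 1"
  shows "\<eta> i = 0"
proof -
  have "(\<Sum>p\<le>n - 1 - (n - 1). \<eta> (p + i) * lv (p + (n - 1))) = (if i = n - 1 then 1 else 0)"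
  proof -
    have "i < n" "n - 1 < n" using i n1 by auto
    then show ?thesis using sys unfolding eta_sys_def by blast
  qed
  then show ?thesis using i top by simp
qed

lemma eta_coef:
  assumes n1: "1 \<le> n" and top: "lv (n - 1) \<noteq> 0" and sys: "eta_sys n lv \<eta>"
    and e: "e < n" and t: "t \<le> 2 * n - 2"
  shows "(\<Sum>s<n. if n - 1 \<le> e + s \<and> 2*n-2-e-s \<le> t then lv s * \<eta> (t - (2*n-2-e-s)) else 0)
         = (if e + t = 2 * n - 2 then 1 else 0)"
proof -
  define r' where "r' = n - 1 - e"
  let ?G = "\<lambda>s. if n - 1 \<le> e + s \<and> 2*n-2-e-s \<le> t then lv s * \<eta> (t - (2*n-2-e-s)) else 0"
  have split: "{..<n} = {..<r'} \<union> {r'..n-1}" using n1 e by (auto simp: r'_def)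
  have z: "?G s = 0" if "s < r'" for s using that by (auto simp: r'_def)
  have "(\<Sum>s<n. ?G s) = (\<Sum>s\<in>{r'..n-1}. ?G s)"
  proof -
    have "(\<Sum>s<r'. ?G s) = 0" using z by (intro sum.neutral) blast
    then show ?thesis unfolding split by (subst sum.union_disjoint) auto
  qed
  also have "\<dots> = (\<Sum>s\<in>{0 + r'..e + r'}. ?G s)" using e n1 by (intro sum.cong) (auto simp: r'_def)
  also have "\<dots> = (\<Sum>p=0..e. ?G (p + r'))" by (rule sum.shift_bounds_cl_nat_ivl)
  also have "\<dots> = (\<Sum>p=0..e. if n - 1 \<le> p + t then lv (p + r') * \<eta> (t - (n - 1 - p)) else 0)"
  proof (intro sum.cong refl)
    fix p assume p: "p \<in> {0..e}"
    have a: "n - 1 \<le> e + (p + r')" "2*n-2-e-(p+r') = n - 1 - p" using p e n1 by (auto simp: r'_def)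
    have b: "(n - 1 - p \<le> t) = (n - 1 \<le> p + t)" by arith
    show "?G (p + r') = (if n - 1 \<le> p + t then lv (p + r') * \<eta> (t - (n - 1 - p)) else 0)"
      using a b by simp
  qed
  also have "\<dots> = (if e + t = 2 * n - 2 then 1 else 0)"
  proof (cases "n - 1 \<le> t")
    case True
    define q' where "q' = t - (n - 1)"
    have q': "q' < n" and r'': "r' < n" using t True e n1 by (auto simp: q'_def r'_def)
    have "(\<Sum>p=0..e. if n - 1 \<le> p + t then lv (p + r') * \<eta> (t - (n - 1 - p)) else 0)
        = (\<Sum>p\<le>n - 1 - r'. \<eta> (p + q') * lv (p + r'))"
    proof -
      have ee: "{0..e} = {..n - 1 - r'}" using e by (auto simp: r'_def)
      show ?thesis unfolding ee
        by (intro sum.cong refl) (use True in \<open>auto simp: q'_def intro!: arg_cong[where f=\<eta>]\<close>)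
    qed
    also have "\<dots> = (if q' = r' then 1 else 0)" using sys q' r'' unfolding eta_sys_def by blast
    also have "(q' = r') = (e + t = 2 * n - 2)" using True e t n1 by (auto simp: q'_def r'_def)
    finally show ?thesis by simp
  next
    case False
    have "\<eta> (t - (n - 1 - p)) = 0" if "n - 1 \<le> p + t" for p
      using eta_low[OF n1 top sys] False by simp
    then have "(\<Sum>p=0..e. if n - 1 \<le> p + t then lv (p + r') * \<eta> (t - (n - 1 - p)) else 0) = 0"
      by (intro sum.neutral) auto
    moreover have "e + t \<noteq> 2 * n - 2" using False e by arith
    ultimately show ?thesis by simp
  qed
  finally show ?thesis .
qed

lemma reindex_row:
  assumes s: "s < n" and t: "t \<le> 2 * n - 2"
  shows "(\<Sum>p<n. if p \<le> t \<and> \<not> (s + p + 2 \<le> n) then lv s * \<eta> (t - p) * ((u::complex) ^ (n - 1 - s) * u ^ (n - 1 - p)) else 0)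
       = (\<Sum>e<n. (if n - 1 \<le> e + s \<and> 2*n-2-e-s \<le> t then lv s * \<eta> (t - (2*n-2-e-s)) else 0) * u ^ e)"
proof -
  let ?H = "\<lambda>p. if p \<le> t \<and> \<not> (s + p + 2 \<le> n) then lv s * \<eta> (t - p) * (u ^ (n - 1 - s) * u ^ (n - 1 - p)) else 0"
  let ?F = "\<lambda>e. (if n - 1 \<le> e + s \<and> 2*n-2-e-s \<le> t then lv s * \<eta> (t - (2*n-2-e-s)) else 0) * u ^ e"
  define P where "P = {p. p < n \<and> n - 1 \<le> s + p}"
  have 1: "(\<Sum>p<n. ?H p) = (\<Sum>p\<in>P. ?H p)"
    by (rule sum.mono_neutral_right) (auto simp: P_def)
  have 2: "(\<Sum>e<n. ?F e) = (\<Sum>e\<in>P. ?F e)"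
    by (rule sum.mono_neutral_right) (auto simp: P_def)
  have 3: "(\<Sum>p\<in>P. ?H p) = (\<Sum>e\<in>P. ?F e)"
  proof (rule sum.reindex_bij_witness[where i="\<lambda>x. 2*n-2-s-x" and j="\<lambda>x. 2*n-2-s-x"])
    fix a assume "a \<in> P" then show "2*n-2-s-(2*n-2-s-a) = a" using s by (auto simp: P_def)
  next
    fix a assume "a \<in> P" then show "2*n-2-s-a \<in> P" using s by (auto simp: P_def)
  next
    fix a assume "a \<in> P" then show "2*n-2-s-(2*n-2-s-a) = a" using s by (auto simp: P_def)
  next
    fix a assume "a \<in> P" then show "2*n-2-s-a \<in> P" using s by (auto simp: P_def)
  next
    fix a assume a: "a \<in> P"
    have c1: "\<not> (s + a + 2 \<le> n)" using a s by (auto simp: P_def)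
    have c2: "n - 1 \<le> (2*n-2-s-a) + s" "2*n-2-(2*n-2-s-a)-s = a" using a s by (auto simp: P_def)
    have c3: "(n - 1 - s) + (n - 1 - a) = 2*n-2-s-a" using a s by (auto simp: P_def)
    have c4: "u ^ (n - 1 - s) * u ^ (n - 1 - a) = u ^ (2*n-2-s-a)"
      by (subst power_add[symmetric]) (simp only: c3)
    show "?F (2*n-2-s-a) = ?H a"
      using c1 c2 c4 by (simp add: mult_ac)
  qed
  show ?thesis using 1 2 3 by simp
qed

lemma claim_t:
  assumes n1: "1 \<le> n" and top: "lv (n - 1) \<noteq> 0" and sys: "eta_sys n lv \<eta>"
    and t: "t \<le> 2 * n - 2"
  shows "(\<Sum>s<n. \<Sum>p<n. if p \<le> t \<and> \<not> (s + p + 2 \<le> n) then lv s * \<eta> (t - p) * ((u::complex) ^ (n - 1 - s) * u ^ (n - 1 - p)) else 0)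
       = (if t + 2 \<le> n then 0 else u ^ (2*n-2-t))"
proof -
  have "(\<Sum>s<n. \<Sum>p<n. if p \<le> t \<and> \<not> (s + p + 2 \<le> n) then lv s * \<eta> (t - p) * (u ^ (n - 1 - s) * u ^ (n - 1 - p)) else 0)
     = (\<Sum>s<n. \<Sum>e<n. (if n - 1 \<le> e + s \<and> 2*n-2-e-s \<le> t then lv s * \<eta> (t - (2*n-2-e-s)) else 0) * u ^ e)"
    by (rule sum.cong[OF refl], rule reindex_row[OF _ t], simp)
  also have "\<dots> = (\<Sum>e<n. (\<Sum>s<n. if n - 1 \<le> e + s \<and> 2*n-2-e-s \<le> t then lv s * \<eta> (t - (2*n-2-e-s)) else 0) * u ^ e)"
    by (subst sum.swap) (simp add: sum_distrib_right)
  also have "\<dots> = (\<Sum>e<n. (if e + t = 2 * n - 2 then 1 else 0) * u ^ e)"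
    using eta_coef[OF n1 top sys _ t] by (intro sum.cong refl) auto
  also have "\<dots> = (\<Sum>e<n. if e = 2*n-2-t then u ^ (2*n-2-t) else 0)"
    using t by (intro sum.cong refl) auto
  also have "\<dots> = (if t + 2 \<le> n then 0 else u ^ (2*n-2-t))"
    using n1 t by (subst sum.delta) auto
  finally show ?thesis .
qed

definition w0 :: "nat \<Rightarrow> (nat \<Rightarrow> complex) \<Rightarrow> (nat \<Rightarrow> complex) \<Rightarrow> complex \<Rightarrow> nat \<Rightarrow> complex" where
  "w0 n lv \<eta> u t = (\<Sum>s<n. \<Sum>p<n. if p \<le> t \<and> s + p + 2 \<le> n then lv s * \<eta> (t - p) * u ^ (n - 2 - s - p) else 0)
     - (if t + 2 \<le> n then u ^ (n - 2 - t) else 0)"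

lemma per_t:
  assumes n1: "1 \<le> n" and top: "lv (n - 1) \<noteq> 0" and sys: "eta_sys n lv \<eta>"
    and t: "t \<le> 2 * n - 2"
  shows "- (u ^ (2*n-2-t)) + (\<Sum>s<n. \<Sum>p<n. if p \<le> t then lv s * \<eta> (t - p) * ((u::complex) ^ (n - 1 - s) * u ^ (n - 1 - p)) else 0)
     = u ^ n * w0 n lv \<eta> u t"
proof -
  let ?X = "\<lambda>s p. lv s * \<eta> (t - p) * (u ^ (n - 1 - s) * u ^ (n - 1 - p))"
  have sp: "(if p \<le> t then ?X s p else 0) = u ^ n * (if p \<le> t \<and> s + p + 2 \<le> n then lv s * \<eta> (t - p) * u ^ (n - 2 - s - p) else 0)
            + (if p \<le> t \<and> \<not> (s + p + 2 \<le> n) then ?X s p else 0)" for s p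
  proof (cases "s + p + 2 \<le> n")
    case True
    have "(n - 1 - s) + (n - 1 - p) = n + (n - 2 - s - p)" using True by auto
    then have "u ^ (n - 1 - s) * u ^ (n - 1 - p) = u ^ n * u ^ (n - 2 - s - p)"
      by (metis power_add)
    then show ?thesis using True by (simp add: mult_ac)
  qed simp
  have "(\<Sum>s<n. \<Sum>p<n. if p \<le> t then ?X s p else 0)
     = u ^ n * (\<Sum>s<n. \<Sum>p<n. if p \<le> t \<and> s + p + 2 \<le> n then lv s * \<eta> (t - p) * u ^ (n - 2 - s - p) else 0)
       + (\<Sum>s<n. \<Sum>p<n. if p \<le> t \<and> \<not> (s + p + 2 \<le> n) then ?X s p else 0)"
    by (simp only: sp sum.distrib sum_distrib_left)
  also have "(\<Sum>s<n. \<Sum>p<n. if p \<le> t \<and> \<not> (s + p + 2 \<le> n) then ?X s p else 0) = (if t + 2 \<le> n then 0 else u ^ (2*n-2-t))"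
    by (rule claim_t[OF n1 top sys t])
  finally have A: "(\<Sum>s<n. \<Sum>p<n. if p \<le> t then ?X s p else 0) = u ^ n * (\<Sum>s<n. \<Sum>p<n. if p \<le> t \<and> s + p + 2 \<le> n then lv s * \<eta> (t - p) * u ^ (n - 2 - s - p) else 0)
       + (if t + 2 \<le> n then 0 else u ^ (2*n-2-t))" .
  have B: "u ^ (2*n-2-t) = (if t + 2 \<le> n then u ^ n * u ^ (n - 2 - t) else u ^ (2*n-2-t))"
  proof (cases "t + 2 \<le> n")
    case True
    then have "2*n-2-t = n + (n - 2 - t)" by auto
    then have "u ^ (2*n-2-t) = u ^ n * u ^ (n - 2 - t)" by (metis power_add)
    then show ?thesis using True by simp
  qed simp
  show ?thesis unfolding w0_def A
    by (subst B) (simp add: algebra_simps)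
qed

lemma sum4_swap:
  "(\<Sum>s\<in>A. \<Sum>p\<in>B. \<Sum>q\<in>C. \<Sum>r\<in>D. f s p q r) = (\<Sum>q\<in>C. \<Sum>r\<in>D. \<Sum>s\<in>A. \<Sum>p\<in>B. f s p q r)"
proof -
  have "(\<Sum>s\<in>A. \<Sum>p\<in>B. \<Sum>q\<in>C. \<Sum>r\<in>D. f s p q r) = (\<Sum>s\<in>A. \<Sum>q\<in>C. \<Sum>p\<in>B. \<Sum>r\<in>D. f s p q r)"
    by (rule sum.cong[OF refl], rule sum.swap)
  also have "\<dots> = (\<Sum>s\<in>A. \<Sum>q\<in>C. \<Sum>r\<in>D. \<Sum>p\<in>B. f s p q r)"
    by (rule sum.cong[OF refl], rule sum.cong[OF refl], rule sum.swap)
  also have "\<dots> = (\<Sum>q\<in>C. \<Sum>s\<in>A. \<Sum>r\<in>D. \<Sum>p\<in>B. f s p q r)"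
    by (rule sum.swap)
  also have "\<dots> = (\<Sum>q\<in>C. \<Sum>r\<in>D. \<Sum>s\<in>A. \<Sum>p\<in>B. f s p q r)"
    by (rule sum.cong[OF refl], rule sum.swap)
  finally show ?thesis .
qed

lemma core_identity:
  fixes K :: "nat \<Rightarrow> nat \<Rightarrow> complex" and u :: complex
  assumes n1: "1 \<le> n" and top: "lv (n - 1) \<noteq> 0" and sys: "eta_sys n lv \<eta>"
  shows "- (1/2) * (\<Sum>q<n. \<Sum>r<n. K q r * (u ^ (n - 1 - q) * u ^ (n - 1 - r)))
     + (\<Sum>s<n. lv s * u ^ (n - 1 - s)) *
       (\<Sum>p<n. ((1/2) * (\<Sum>q<n. \<Sum>r<n. if p \<le> q + r then \<eta> (q + r - p) * K q r else 0)) * u ^ (n - 1 - p))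
     = u ^ n * ((1/2) * (\<Sum>q<n. \<Sum>r<n. K q r * w0 n lv \<eta> u (q + r)))"
proof -
  have "(\<Sum>s<n. lv s * u ^ (n - 1 - s)) *
       (\<Sum>p<n. ((1/2) * (\<Sum>q<n. \<Sum>r<n. if p \<le> q + r then \<eta> (q + r - p) * K q r else 0)) * u ^ (n - 1 - p))
     = (\<Sum>s<n. \<Sum>p<n. \<Sum>q<n. \<Sum>r<n. (1/2) * K q r * (if p \<le> q + r then lv s * \<eta> (q + r - p) * (u ^ (n - 1 - s) * u ^ (n - 1 - p)) else 0))"
  proof -
    have tm: "(lv s * u ^ (n - 1 - s)) * (((1/2) * (\<Sum>q<n. \<Sum>r<n. if p \<le> q + r then \<eta> (q + r - p) * K q r else 0)) * u ^ (n - 1 - p))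
      = (\<Sum>q<n. \<Sum>r<n. (1/2) * K q r * (if p \<le> q + r then lv s * \<eta> (q + r - p) * (u ^ (n - 1 - s) * u ^ (n - 1 - p)) else 0))" for s p
    proof -
      have "(lv s * u ^ (n - 1 - s)) * (((1/2) * (\<Sum>q<n. \<Sum>r<n. if p \<le> q + r then \<eta> (q + r - p) * K q r else 0)) * u ^ (n - 1 - p))
        = (lv s * u ^ (n - 1 - s) * u ^ (n - 1 - p) * (1/2)) * (\<Sum>q<n. \<Sum>r<n. if p \<le> q + r then \<eta> (q + r - p) * K q r else 0)"
        by (simp only: mult_ac)
      also have "\<dots> = (\<Sum>q<n. \<Sum>r<n. (lv s * u ^ (n - 1 - s) * u ^ (n - 1 - p) * (1/2)) * (if p \<le> q + r then \<eta> (q + r - p) * K q r else 0))"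
        by (simp only: sum_distrib_left)
      also have "\<dots> = (\<Sum>q<n. \<Sum>r<n. (1/2) * K q r * (if p \<le> q + r then lv s * \<eta> (q + r - p) * (u ^ (n - 1 - s) * u ^ (n - 1 - p)) else 0))"
        by (intro sum.cong refl) (simp add: mult_ac)
      finally show ?thesis .
    qed
    show ?thesis unfolding sum_product tm ..
  qed
  also have "\<dots> = (\<Sum>q<n. \<Sum>r<n. \<Sum>s<n. \<Sum>p<n. (1/2) * K q r * (if p \<le> q + r then lv s * \<eta> (q + r - p) * (u ^ (n - 1 - s) * u ^ (n - 1 - p)) else 0))"
    by (rule sum4_swap)
  also have "\<dots> = (\<Sum>q<n. \<Sum>r<n. (1/2) * K q r * (\<Sum>s<n. \<Sum>p<n. (if p \<le> q + r then lv s * \<eta> (q + r - p) * (u ^ (n - 1 - s) * u ^ (n - 1 - p)) else 0)))"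
    by (simp add: sum_distrib_left)
  also have "\<dots> = (\<Sum>q<n. \<Sum>r<n. (1/2) * K q r * (u ^ n * w0 n lv \<eta> u (q + r) + u ^ (2*n-2-(q+r))))"
  proof (intro sum.cong refl)
    fix q r assume "q \<in> {..<n}" "r \<in> {..<n}"
    then have "q + r \<le> 2 * n - 2" by auto
    from per_t[OF n1 top sys this, of u] show "(1/2) * K q r * (\<Sum>s<n. \<Sum>p<n. (if p \<le> q + r then lv s * \<eta> (q + r - p) * (u ^ (n - 1 - s) * u ^ (n - 1 - p)) else 0))
       = (1/2) * K q r * (u ^ n * w0 n lv \<eta> u (q + r) + u ^ (2*n-2-(q+r)))"
      by (simp add: algebra_simps)
  qed
  also have "\<dots> = u ^ n * ((1/2) * (\<Sum>q<n. \<Sum>r<n. K q r * w0 n lv \<eta> u (q + r)))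
       + (1/2) * (\<Sum>q<n. \<Sum>r<n. K q r * (u ^ (n - 1 - q) * u ^ (n - 1 - r)))"
  proof -
    have e: "u ^ (2*n-2-(q+r)) = u ^ (n - 1 - q) * u ^ (n - 1 - r)" if "q < n" "r < n" for q r
    proof -
      have "2*n-2-(q+r) = (n - 1 - q) + (n - 1 - r)" using that by auto
      then show ?thesis by (simp add: power_add)
    qed
    have "(\<Sum>q<n. \<Sum>r<n. (1/2) * K q r * (u ^ n * w0 n lv \<eta> u (q + r) + u ^ (2*n-2-(q+r))))
       = (\<Sum>q<n. \<Sum>r<n. (1/2) * K q r * (u ^ n * w0 n lv \<eta> u (q + r) + u ^ (n - 1 - q) * u ^ (n - 1 - r)))"
      using e by (intro sum.cong refl) auto
    then show ?thesis by (simp add: algebra_simps sum.distrib sum_distrib_left)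
  qed
  finally show ?thesis by (simp add: algebra_simps)
qed



lemma kappa_add_left: "kappa Bk (x + y) w = kappa Bk x w + kappa Bk y w"
  unfolding kappa_def by (simp add: distrib_right sum.distrib)
lemma kappa_add_right: "kappa Bk w (x + y) = kappa Bk w x + kappa Bk w y"
  unfolding kappa_def by (simp add: distrib_left sum.distrib)
lemma kappa_zero_left: "kappa Bk 0 w = 0" unfolding kappa_def by simp
lemma kappa_zero_right: "kappa Bk w 0 = 0" unfolding kappa_def by simp
lemma kappa_scale_left: "kappa Bk (c *s x) w = c * kappa Bk x w"
  unfolding kappa_def by (simp add: sum_distrib_left mult_ac)
lemma kappa_scale_right: "kappa Bk w (c *s x) = c * kappa Bk w x"
  unfolding kappa_def by (simp add: sum_distrib_left mult_ac)

lemma kappa_sum_left: "kappa Bk (\<Sum>i\<in>A. f i) w = (\<Sum>i\<in>A. kappa Bk (f i) w)"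
  by (induction A rule: infinite_finite_induct) (auto simp: kappa_zero_left kappa_add_left)
lemma kappa_sum_right: "kappa Bk w (\<Sum>i\<in>A. f i) = (\<Sum>i\<in>A. kappa Bk w (f i))"
  by (induction A rule: infinite_finite_induct) (auto simp: kappa_zero_right kappa_add_right)

lemma kappa_gaudin:
  "kappa Bk (gaudin_lax S m zpos J w x) (gaudin_lax S m zpos J w x) =
   (\<Sum>\<beta>\<in>S. \<Sum>p<m \<beta>. \<Sum>\<gamma>\<in>S. \<Sum>q<m \<gamma>.
      ((1 / (w - zpos \<beta>) ^ (p + 1)) * (1 / (w - zpos \<gamma>) ^ (q + 1))) * kappa Bk (J \<beta> p x) (J \<gamma> q x))"
  unfolding gaudin_lax_def
  apply (simp only: kappa_sum_left kappa_scale_left)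
  apply (simp only: kappa_sum_right kappa_scale_right sum_distrib_left)
  apply (simp only: mult.assoc)
  done

lemma integral_sum4:
  fixes f :: "'s \<Rightarrow> nat \<Rightarrow> 's \<Rightarrow> nat \<Rightarrow> real \<Rightarrow> complex"
  assumes "\<And>\<beta> p \<gamma> q. \<beta> \<in> S \<Longrightarrow> p < m \<beta> \<Longrightarrow> \<gamma> \<in> S \<Longrightarrow> q < m \<gamma> \<Longrightarrow> integrable M (f \<beta> p \<gamma> q)"
  shows "integral\<^sup>L M (\<lambda>x. \<Sum>\<beta>\<in>S. \<Sum>p<m \<beta>. \<Sum>\<gamma>\<in>S. \<Sum>q<m \<gamma>. c \<beta> p \<gamma> q * f \<beta> p \<gamma> q x)
    = (\<Sum>\<beta>\<in>S. \<Sum>p<m \<beta>. \<Sum>\<gamma>\<in>S. \<Sum>q<m \<gamma>. c \<beta> p \<gamma> q * integral\<^sup>L M (f \<beta> p \<gamma> q))"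
proof -
  have i4: "integrable M (\<lambda>x. c \<beta> p \<gamma> q * f \<beta> p \<gamma> q x)" if "\<beta> \<in> S" "p < m \<beta>" "\<gamma> \<in> S" "q < m \<gamma>" for \<beta> p \<gamma> q
    using assms that by blast
  have i3: "integrable M (\<lambda>x. \<Sum>q<m \<gamma>. c \<beta> p \<gamma> q * f \<beta> p \<gamma> q x)" if "\<beta> \<in> S" "p < m \<beta>" "\<gamma> \<in> S" for \<beta> p \<gamma>
    by (rule Bochner_Integration.integrable_sum) (use i4 that in auto)
  have i2: "integrable M (\<lambda>x. \<Sum>\<gamma>\<in>S. \<Sum>q<m \<gamma>. c \<beta> p \<gamma> q * f \<beta> p \<gamma> q x)" if "\<beta> \<in> S" "p < m \<beta>" for \<beta> p
    by (rule Bochner_Integration.integrable_sum) (use i3 that in auto)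
  have i1: "integrable M (\<lambda>x. \<Sum>p<m \<beta>. \<Sum>\<gamma>\<in>S. \<Sum>q<m \<gamma>. c \<beta> p \<gamma> q * f \<beta> p \<gamma> q x)" if "\<beta> \<in> S" for \<beta>
    by (rule Bochner_Integration.integrable_sum) (use i2 that in auto)
  show ?thesis
    apply (subst Bochner_Integration.integral_sum, rule i1, assumption)
    apply (intro sum.cong refl)
    apply (subst Bochner_Integration.integral_sum, rule i2, assumption, simp)
    apply (intro sum.cong refl)
    apply (subst Bochner_Integration.integral_sum, rule i3, assumption, simp, assumption)
    apply (intro sum.cong refl)
    apply (subst Bochner_Integration.integral_sum, rule i4, assumption, simp, assumption, simp)
    apply (intro sum.cong refl)
    apply simp
    done
qed

lemma integral_gaudin:
  assumes integrable: "\<forall>\<alpha>\<in>S. \<forall>\<beta>\<in>S. \<forall>p<m \<alpha>. \<forall>q<m \<beta>.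
                       integrable M (\<lambda>x. kappa Bk (J \<alpha> p x) (J \<beta> q x))"
  shows "integral\<^sup>L M (\<lambda>x. kappa Bk (gaudin_lax S m zpos J w x) (gaudin_lax S m zpos J w x)) =
   (\<Sum>\<beta>\<in>S. \<Sum>p<m \<beta>. \<Sum>\<gamma>\<in>S. \<Sum>q<m \<gamma>.
      ((1 / (w - zpos \<beta>) ^ (p + 1)) * (1 / (w - zpos \<gamma>) ^ (q + 1))) * integral\<^sup>L M (\<lambda>x. kappa Bk (J \<beta> p x) (J \<gamma> q x)))"
  unfolding kappa_gaudin
  by (rule integral_sum4[where f="\<lambda>\<beta> p \<gamma> q x. kappa Bk (J \<beta> p x) (J \<gamma> q x)"]) (use integrable in blast)

lemma final_algebra:
  fixes U Lp R T SX SY Ioo Va V' W0 tw I :: complex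
  assumes U: "U \<noteq> 0" and L: "Lp + U * R \<noteq> 0"
    and tw: "tw = (Lp + U * R) / U"
    and I: "I = T / (U * U) + SX / U + SY / U + Ioo"
    and core: "- (1/2) * T + Lp * Va = U * W0"
  shows "- (1 / (2 * tw)) * I + (Va / U + V') = (W0 + R * Va - (1/2) * (SX + SY + U * Ioo)) / (Lp + U * R) + V'"
proof -
  define Lt where "Lt = Lp + U * R"
  have Lp: "Lp = Lt - U * R" by (simp add: Lt_def)
  have Lt: "Lt \<noteq> 0" using L by (simp add: Lt_def)
  have T: "T = 2 * ((Lt - U * R) * Va - U * W0)" using core unfolding Lp by (simp add: algebra_simps)
  have tw': "tw = Lt / U" using tw by (simp add: Lt_def)
  show ?thesis unfolding tw' I T Lt_def[symmetric] Lp using U Lt by (simp add: field_simps)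
qed



lemma pow_split:
  fixes u :: complex
  assumes "u \<noteq> 0" "s < n"
  shows "1 / u ^ (s + 1) = u ^ (n - 1 - s) / u ^ n"
proof -
  have "n = (n - 1 - s) + (s + 1)" using assms(2) by simp
  then have "u ^ n = u ^ (n - 1 - s) * u ^ (s + 1)" by (metis power_add)
  then show ?thesis using assms(1) by (simp add: field_simps)
qed

lemma hol_if_const:
  "(c \<Longrightarrow> f holomorphic_on U) \<Longrightarrow> (\<lambda>x. if c then f x else 0) holomorphic_on U"
  by (cases c) auto

lemma local_reg:
  fixes S :: "'s set" and m :: "'s \<Rightarrow> nat"
    and lev :: "'s \<Rightarrow> nat \<Rightarrow> complex" and zpos :: "'s \<Rightarrow> complex" and linf :: real
    and Bk :: "complex^'n^'n" and M :: "real measure"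
    and J :: "'s \<Rightarrow> nat \<Rightarrow> real \<Rightarrow> complex^'n"
  assumes finS: "finite S"
    and m_pos: "\<forall>\<alpha>\<in>S. 1 \<le> m \<alpha>"
    and lev_top: "\<forall>\<alpha>\<in>S. lev \<alpha> (m \<alpha> - 1) \<noteq> 0"
    and z_inj: "inj_on zpos S"
    and integrable: "\<forall>\<alpha>\<in>S. \<forall>\<beta>\<in>S. \<forall>p<m \<alpha>. \<forall>q<m \<beta>.
                       integrable M (\<lambda>x. kappa Bk (J \<alpha> p x) (J \<beta> q x))"
    and aS: "\<alpha> \<in> S"
  shows "\<exists>U G. open U \<and> zpos \<alpha> \<in> U \<and> G holomorphic_on U \<and>
     (\<forall>w\<in>U. w \<noteq> zpos \<alpha> \<longrightarrow> w \<notin> zpos ` S \<and>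
        charge_Q M Bk S m lev zpos linf J w
          + (\<Sum>\<beta>\<in>S. \<Sum>p<m \<beta>. charge_D M Bk m lev J \<beta> p / (w - zpos \<beta>) ^ (p + 1)) = G w)"
proof -
  define n where "n = m \<alpha>"
  define z where "z = zpos \<alpha>"
  define S' where "S' = S - {\<alpha>}"
  have n1: "1 \<le> n" and top: "lev \<alpha> (n - 1) \<noteq> 0" using m_pos lev_top aS by (auto simp: n_def)
  define a where "a \<beta> p w = 1 / (w - zpos \<beta>) ^ (p + 1)" for \<beta> p w
  define Kf where "Kf \<beta> p \<gamma> q = integral\<^sup>L M (\<lambda>x. kappa Bk (J \<beta> p x) (J \<gamma> q x))" for \<beta> p \<gamma> q
  define D where "D \<beta> p = charge_D M Bk m lev J \<beta> p" for \<beta> p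
  define \<eta> where "\<eta> = eta_coeffs n (lev \<alpha>)"
  have sys: "eta_sys n (lev \<alpha>) \<eta>" unfolding \<eta>_def by (rule eta_coeffs_sys[of n "lev \<alpha>", OF n1 top])
  define Lp where "Lp w = (\<Sum>s<n. lev \<alpha> s * (w - z) ^ (n - 1 - s))" for w
  define R where "R w = (\<Sum>\<beta>\<in>S'. \<Sum>p<m \<beta>. lev \<beta> p * a \<beta> p w) - complex_of_real linf" for w
  define Lf where "Lf w = Lp w + (w - z) ^ n * R w" for w
  define X where "X p w = (\<Sum>\<gamma>\<in>S'. \<Sum>q<m \<gamma>. a \<gamma> q w * Kf \<alpha> p \<gamma> q)" for p w
  define Y where "Y q w = (\<Sum>\<beta>\<in>S'. \<Sum>p<m \<beta>. a \<beta> p w * Kf \<beta> p \<alpha> q)" for q w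
  define Ioo where "Ioo w = (\<Sum>\<beta>\<in>S'. \<Sum>p<m \<beta>. \<Sum>\<gamma>\<in>S'. \<Sum>q<m \<gamma>. (a \<beta> p w * a \<gamma> q w) * Kf \<beta> p \<gamma> q)" for w
  define Va where "Va w = (\<Sum>p<n. D \<alpha> p * (w - z) ^ (n - 1 - p))" for w
  define V' where "V' w = (\<Sum>\<beta>\<in>S'. \<Sum>p<m \<beta>. D \<beta> p * a \<beta> p w)" for w
  define W0 where "W0 w = (1/2) * (\<Sum>q<n. \<Sum>r<n. Kf \<alpha> q \<alpha> r * w0 n (lev \<alpha>) \<eta> (w - z) (q + r))" for w
  define SX where "SX w = (\<Sum>p<n. (w - z) ^ (n - 1 - p) * X p w)" for w
  define SY where "SY w = (\<Sum>q<n. (w - z) ^ (n - 1 - q) * Y q w)" for w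
  define G where "G w = (W0 w + R w * Va w - (1/2) * (SX w + SY w + (w - z) ^ n * Ioo w)) / Lf w + V' w" for w
  define Ob where "Ob = - (zpos ` S')"
  have openO: "open Ob" unfolding Ob_def using finS by (auto simp: S'_def intro!: finite_imp_closed)
  have zO: "z \<in> Ob" using z_inj aS by (auto simp: Ob_def S'_def z_def inj_on_def)
  have Onz: "w - zpos \<beta> \<noteq> 0" if "w \<in> Ob" "\<beta> \<in> S'" for w \<beta> using that by (auto simp: Ob_def)
  have a_hol: "a \<beta> p holomorphic_on Ob" if "\<beta> \<in> S'" for \<beta> p
    unfolding a_def using Onz that by (auto intro!: holomorphic_intros)
  have R_hol: "R holomorphic_on Ob"
    unfolding R_def[abs_def] using a_hol by (auto intro!: holomorphic_intros)
  have Lf_hol: "Lf holomorphic_on Ob"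
    unfolding Lf_def[abs_def] Lp_def[abs_def] using R_hol by (auto intro!: holomorphic_intros)
  have Lfz: "Lf z = lev \<alpha> (n - 1)"
  proof -
    have "Lp z = (\<Sum>s<n. if s = n - 1 then lev \<alpha> s else 0)"
      unfolding Lp_def by (intro sum.cong refl) (auto simp: power_0_left)
    also have "\<dots> = lev \<alpha> (n - 1)" using n1 by (subst sum.delta) auto
    finally show ?thesis unfolding Lf_def using n1 by simp
  qed
  define U where "U = Ob \<inter> Lf -` (- {0})"
  have openU: "open U"
  proof -
    have "continuous_on Ob Lf" using Lf_hol by (rule holomorphic_on_imp_continuous_on)
    then have "open (Lf -` (- {0}) \<inter> Ob)" using openO by (subst (asm) continuous_on_open_vimage) auto
    then show ?thesis unfolding U_def by (simp add: Int_commute)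
  qed
  have zU: "z \<in> U" unfolding U_def using zO Lfz top by simp
  have G_hol: "G holomorphic_on U"
  proof -
    have UO: "U \<subseteq> Ob" by (auto simp: U_def)
    have aU: "a \<beta> p holomorphic_on U" if "\<beta> \<in> S'" for \<beta> p using a_hol[OF that] UO by (rule holomorphic_on_subset)
    have RU: "R holomorphic_on U" using R_hol UO by (rule holomorphic_on_subset)
    have LU: "Lf holomorphic_on U" using Lf_hol UO by (rule holomorphic_on_subset)
    have LnzU: "\<And>w. w \<in> U \<Longrightarrow> Lf w \<noteq> 0" by (auto simp: U_def)
    show ?thesis
      unfolding G_def[abs_def] W0_def w0_def Va_def V'_def SX_def SY_def X_def Y_def Ioo_def
      using aU RU LU LnzU by (auto intro!: holomorphic_intros hol_if_const)
  qed
  show ?thesis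
  proof (intro exI conjI ballI impI)
    show "open U" by (rule openU)
    show "zpos \<alpha> \<in> U" using zU by (simp add: z_def)
    show "G holomorphic_on U" by (rule G_hol)
  next
    fix w assume wU: "w \<in> U" and wz: "w \<noteq> zpos \<alpha>"
    have wO: "w \<in> Ob" and Lnz: "Lf w \<noteq> 0" using wU by (auto simp: U_def)
    show "w \<notin> zpos ` S" using wO wz by (auto simp: Ob_def S'_def)
    show "charge_Q M Bk S m lev zpos linf J w
          + (\<Sum>\<beta>\<in>S. \<Sum>p<m \<beta>. charge_D M Bk m lev J \<beta> p / (w - zpos \<beta>) ^ (p + 1)) = G w"
    proof -
      define u where "u = w - z"
      have u0: "u \<noteq> 0" using wz by (simp add: u_def z_def)
      have U0: "u ^ n \<noteq> 0" using u0 by simp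
      have wnz: "w - zpos \<beta> \<noteq> 0" if "\<beta> \<in> S'" for \<beta> using Onz wO that by blast
      have aa: "a \<alpha> p w = u ^ (n - 1 - p) / u ^ n" if "p < n" for p
        unfolding a_def using pow_split[OF u0 that] by (simp add: u_def z_def)
      have sumS: "(\<Sum>\<beta>\<in>S. f \<beta>) = f \<alpha> + (\<Sum>\<beta>\<in>S'. f \<beta>)" for f :: "'s \<Rightarrow> complex"
        unfolding S'_def by (rule sum.remove[OF finS aS])
      have LpU: "Lp w / u ^ n = (\<Sum>s<n. lev \<alpha> s * a \<alpha> s w)"
        unfolding Lp_def sum_divide_distrib u_def[symmetric]
        by (intro sum.cong refl) (simp add: aa)
      have P1: "twist S m lev zpos linf w = (Lp w + u ^ n * R w) / u ^ n"
      proof -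
        have "twist S m lev zpos linf w = (\<Sum>s<n. lev \<alpha> s * a \<alpha> s w) + R w"
          unfolding twist_def R_def sumS by (simp add: a_def n_def)
        also have "\<dots> = (Lp w + u ^ n * R w) / u ^ n" unfolding LpU[symmetric] using U0
          by (simp add: field_simps)
        finally show ?thesis .
      qed
      define T where "T = (\<Sum>q<n. \<Sum>r<n. Kf \<alpha> q \<alpha> r * (u ^ (n - 1 - q) * u ^ (n - 1 - r)))"
      have P2: "integral\<^sup>L M (\<lambda>x. kappa Bk (gaudin_lax S m zpos J w x) (gaudin_lax S m zpos J w x))
          = T / (u ^ n * u ^ n) + SX w / u ^ n + SY w / u ^ n + Ioo w"
      proof -
        define F where "F \<beta> p \<gamma> q = (a \<beta> p w * a \<gamma> q w) * Kf \<beta> p \<gamma> q" for \<beta> p \<gamma> q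
        have I0: "integral\<^sup>L M (\<lambda>x. kappa Bk (gaudin_lax S m zpos J w x) (gaudin_lax S m zpos J w x))
          = (\<Sum>\<beta>\<in>S. \<Sum>p<m \<beta>. \<Sum>\<gamma>\<in>S. \<Sum>q<m \<gamma>. F \<beta> p \<gamma> q)"
          unfolding F_def a_def Kf_def by (rule integral_gaudin[OF integrable])
        also have "\<dots> = (\<Sum>\<beta>\<in>S. \<Sum>p<m \<beta>. (\<Sum>q<n. F \<beta> p \<alpha> q) + (\<Sum>\<gamma>\<in>S'. \<Sum>q<m \<gamma>. F \<beta> p \<gamma> q))"
          by (simp only: sumS n_def)
        also have "\<dots> = (\<Sum>p<n. \<Sum>q<n. F \<alpha> p \<alpha> q) + (\<Sum>p<n. \<Sum>\<gamma>\<in>S'. \<Sum>q<m \<gamma>. F \<alpha> p \<gamma> q)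
              + (\<Sum>\<beta>\<in>S'. \<Sum>p<m \<beta>. \<Sum>q<n. F \<beta> p \<alpha> q) + Ioo w"
          unfolding sumS by (simp add: sum.distrib n_def Ioo_def F_def)
        also have "(\<Sum>p<n. \<Sum>q<n. F \<alpha> p \<alpha> q) = T / (u ^ n * u ^ n)"
          unfolding T_def sum_divide_distrib F_def
          by (intro sum.cong refl) (simp add: aa)
        also have "(\<Sum>p<n. \<Sum>\<gamma>\<in>S'. \<Sum>q<m \<gamma>. F \<alpha> p \<gamma> q) = SX w / u ^ n"
          unfolding SX_def X_def sum_divide_distrib F_def
          by (intro sum.cong refl) (simp add: aa sum_distrib_left mult_ac u_def[symmetric] sum_divide_distrib)
        also have "(\<Sum>\<beta>\<in>S'. \<Sum>p<m \<beta>. \<Sum>q<n. F \<beta> p \<alpha> q) = SY w / u ^ n"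
        proof -
          have "(\<Sum>\<beta>\<in>S'. \<Sum>p<m \<beta>. \<Sum>q<n. F \<beta> p \<alpha> q) = (\<Sum>\<beta>\<in>S'. \<Sum>q<n. \<Sum>p<m \<beta>. F \<beta> p \<alpha> q)"
            by (rule sum.cong[OF refl], rule sum.swap)
          also have "\<dots> = (\<Sum>q<n. \<Sum>\<beta>\<in>S'. \<Sum>p<m \<beta>. F \<beta> p \<alpha> q)" by (rule sum.swap)
          also have "\<dots> = SY w / u ^ n"
            unfolding SY_def Y_def sum_divide_distrib F_def
            by (intro sum.cong refl) (simp add: aa sum_distrib_left mult_ac u_def[symmetric] sum_divide_distrib)
          finally show ?thesis .
        qed
        finally show ?thesis .
      qed
      have P3: "(\<Sum>\<beta>\<in>S. \<Sum>p<m \<beta>. charge_D M Bk m lev J \<beta> p / (w - zpos \<beta>) ^ (p + 1)) = Va w / u ^ n + V' w"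
      proof -
        have "(\<Sum>\<beta>\<in>S. \<Sum>p<m \<beta>. charge_D M Bk m lev J \<beta> p / (w - zpos \<beta>) ^ (p + 1))
            = (\<Sum>p<n. D \<alpha> p * a \<alpha> p w) + V' w"
          unfolding sumS V'_def by (simp add: a_def D_def n_def)
        also have "(\<Sum>p<n. D \<alpha> p * a \<alpha> p w) = Va w / u ^ n"
          unfolding Va_def sum_divide_distrib u_def[symmetric]
          by (intro sum.cong refl) (simp add: aa)
        finally show ?thesis .
      qed
      have core: "- (1/2) * T + Lp w * Va w = u ^ n * W0 w"
      proof -
        have Lpw: "Lp w = (\<Sum>s<n. lev \<alpha> s * u ^ (n - 1 - s))" by (simp add: Lp_def u_def)
        have Vaw: "Va w = (\<Sum>p<n. ((1/2) * (\<Sum>q<n. \<Sum>r<n. if p \<le> q + r then \<eta> (q + r - p) * Kf \<alpha> q \<alpha> r else 0)) * u ^ (n - 1 - p))"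
          unfolding Va_def D_def charge_D_def \<eta>_def Kf_def n_def u_def by simp
        have W0w: "W0 w = (1/2) * (\<Sum>q<n. \<Sum>r<n. Kf \<alpha> q \<alpha> r * w0 n (lev \<alpha>) \<eta> u (q + r))"
          by (simp add: W0_def u_def)
        show ?thesis unfolding Lpw Vaw W0w T_def
          by (rule core_identity[OF n1 top sys])
      qed
      have Lw: "Lp w + u ^ n * R w \<noteq> 0" using Lnz by (simp add: Lf_def u_def)
      have "charge_Q M Bk S m lev zpos linf J w
          + (\<Sum>\<beta>\<in>S. \<Sum>p<m \<beta>. charge_D M Bk m lev J \<beta> p / (w - zpos \<beta>) ^ (p + 1))
          = - (1 / (2 * twist S m lev zpos linf w)) * integral\<^sup>L M (\<lambda>x. kappa Bk (gaudin_lax S m zpos J w x) (gaudin_lax S m zpos J w x))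
            + (Va w / u ^ n + V' w)"
        unfolding charge_Q_def P3 by simp
      also have "\<dots> = (W0 w + R w * Va w - (1/2) * (SX w + SY w + u ^ n * Ioo w)) / (Lp w + u ^ n * R w) + V' w"
        by (rule final_algebra[OF U0 Lw P1 P2 core])
      also have "\<dots> = G w" by (simp add: G_def Lf_def u_def)
      finally show ?thesis .
    qed
  qed
qed


theorem propositionA3:
  fixes S :: "'s set" and bar :: "'s \<Rightarrow> 's" and m :: "'s \<Rightarrow> nat"
    and lev :: "'s \<Rightarrow> nat \<Rightarrow> complex" and zpos :: "'s \<Rightarrow> complex" and linf :: real
    and Bk :: "complex^'n^'n" and M :: "real measure"
    and J :: "'s \<Rightarrow> nat \<Rightarrow> real \<Rightarrow> complex^'n"
  assumes finS: "finite S"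
    and bar_in: "\<forall>\<alpha>\<in>S. bar \<alpha> \<in> S \<and> bar (bar \<alpha>) = \<alpha>"
    and bar_m: "\<forall>\<alpha>\<in>S. m (bar \<alpha>) = m \<alpha>"
    and bar_z: "\<forall>\<alpha>\<in>S. zpos (bar \<alpha>) = cnj (zpos \<alpha>)"
    and bar_lev: "\<forall>\<alpha>\<in>S. \<forall>p. lev (bar \<alpha>) p = cnj (lev \<alpha> p)"
    and m_pos: "\<forall>\<alpha>\<in>S. 1 \<le> m \<alpha>"
    and lev_top: "\<forall>\<alpha>\<in>S. lev \<alpha> (m \<alpha> - 1) \<noteq> 0"
    and z_inj: "inj_on zpos S"
    and linf_nz: "linf \<noteq> 0"
    and Bk_sym: "transpose Bk = Bk"
    and integrable: "\<forall>\<alpha>\<in>S. \<forall>\<beta>\<in>S. \<forall>p<m \<alpha>. \<forall>q<m \<beta>.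
                       integrable M (\<lambda>x. kappa Bk (J \<alpha> p x) (J \<beta> q x))"
  shows "\<exists>Qreg :: complex \<Rightarrow> complex.
           (\<forall>w. w \<notin> zpos ` S \<and> twist S m lev zpos linf w \<noteq> 0 \<longrightarrow>
              charge_Q M Bk S m lev zpos linf J w =
                - (\<Sum>\<alpha>\<in>S. \<Sum>p<m \<alpha>. charge_D M Bk m lev J \<alpha> p / (w - zpos \<alpha>) ^ (p + 1))
                + Qreg w)
         \<and> (\<forall>\<alpha>\<in>S. \<exists>r>0. Qreg holomorphic_on ball (zpos \<alpha>) r)"
  proof -
  define P where "P \<alpha> U G \<longleftrightarrow> open U \<and> zpos \<alpha> \<in> U \<and> G holomorphic_on U \<and>
     (\<forall>w\<in>U. w \<noteq> zpos \<alpha> \<longrightarrow> w \<notin> zpos ` S \<and>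
        charge_Q M Bk S m lev zpos linf J w
          + (\<Sum>\<beta>\<in>S. \<Sum>p<m \<beta>. charge_D M Bk m lev J \<beta> p / (w - zpos \<beta>) ^ (p + 1)) = G w)" for \<alpha> U and G :: "complex \<Rightarrow> complex"
  have loc: "\<forall>\<alpha>\<in>S. \<exists>U. \<exists>G. P \<alpha> U G"
  proof
    fix \<alpha> assume aS: "\<alpha> \<in> S"
    show "\<exists>U. \<exists>G. P \<alpha> U G" unfolding P_def
      by (rule local_reg[where S=S and m=m and lev=lev and zpos=zpos and linf=linf and Bk=Bk and M=M and J=J, OF finS m_pos lev_top z_inj integrable aS])
  qed
  from bchoice[OF loc] obtain Uf where Uf: "\<forall>\<alpha>\<in>S. \<exists>G. P \<alpha> (Uf \<alpha>) G" ..
  from bchoice[OF Uf] obtain Gf where G: "\<forall>\<alpha>\<in>S. P \<alpha> (Uf \<alpha>) (Gf \<alpha>)" ..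
  have UG: "open (Uf \<alpha>) \<and> zpos \<alpha> \<in> Uf \<alpha> \<and> Gf \<alpha> holomorphic_on Uf \<alpha> \<and>
     (\<forall>w\<in>Uf \<alpha>. w \<noteq> zpos \<alpha> \<longrightarrow> w \<notin> zpos ` S \<and>
        charge_Q M Bk S m lev zpos linf J w
          + (\<Sum>\<beta>\<in>S. \<Sum>p<m \<beta>. charge_D M Bk m lev J \<beta> p / (w - zpos \<beta>) ^ (p + 1)) = Gf \<alpha> w)"
    if "\<alpha> \<in> S" for \<alpha>
    using G that unfolding P_def by blast
  define Qreg where "Qreg w = (if w \<in> zpos ` S then Gf (inv_into S zpos w) w
      else charge_Q M Bk S m lev zpos linf J w
          + (\<Sum>\<beta>\<in>S. \<Sum>p<m \<beta>. charge_D M Bk m lev J \<beta> p / (w - zpos \<beta>) ^ (p + 1)))" for w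
  show ?thesis
  proof (rule exI[where x=Qreg], intro conjI allI impI ballI)
    fix w assume "w \<notin> zpos ` S \<and> twist S m lev zpos linf w \<noteq> 0"
    then show "charge_Q M Bk S m lev zpos linf J w =
                - (\<Sum>\<alpha>\<in>S. \<Sum>p<m \<alpha>. charge_D M Bk m lev J \<alpha> p / (w - zpos \<alpha>) ^ (p + 1))
                + Qreg w" by (simp add: Qreg_def)
  next
    fix \<alpha> assume aS: "\<alpha> \<in> S"
    from UG[OF aS] have o: "open (Uf \<alpha>)" and zin: "zpos \<alpha> \<in> Uf \<alpha>" and hol: "Gf \<alpha> holomorphic_on Uf \<alpha>"
      and eq: "\<forall>w\<in>Uf \<alpha>. w \<noteq> zpos \<alpha> \<longrightarrow> w \<notin> zpos ` S \<and>
        charge_Q M Bk S m lev zpos linf J w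
          + (\<Sum>\<beta>\<in>S. \<Sum>p<m \<beta>. charge_D M Bk m lev J \<beta> p / (w - zpos \<beta>) ^ (p + 1)) = Gf \<alpha> w" by auto
    obtain r where r: "r > 0" "ball (zpos \<alpha>) r \<subseteq> Uf \<alpha>" using o zin openE by blast
    have "Gf \<alpha> w = Qreg w" if "w \<in> ball (zpos \<alpha>) r" for w
    proof (cases "w = zpos \<alpha>")
      case True
      have "inv_into S zpos w = \<alpha>" using True aS z_inj by (simp add: inv_into_f_f)
      then show ?thesis using True aS by (simp add: Qreg_def)
    next
      case False
      have wU: "w \<in> Uf \<alpha>" using r(2) that by blast
      have nz: "w \<notin> zpos ` S" using eq wU False by blast
      have e: "charge_Q M Bk S m lev zpos linf J w
          + (\<Sum>\<beta>\<in>S. \<Sum>p<m \<beta>. charge_D M Bk m lev J \<beta> p / (w - zpos \<beta>) ^ (p + 1)) = Gf \<alpha> w"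
        using eq wU False by blast
      show ?thesis unfolding Qreg_def using nz e by simp
    qed
    note eqb = this
    have holb: "Gf \<alpha> holomorphic_on ball (zpos \<alpha>) r" using hol r(2) by (rule holomorphic_on_subset)
    have "Qreg holomorphic_on ball (zpos \<alpha>) r" using holomorphic_transform[OF holb eqb] .
    then show "\<exists>r>0. Qreg holomorphic_on ball (zpos \<alpha>) r" using r(1) by blast
  qed
qed

end
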